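(* Let $u$ be any element of $W=S_n$ and let $U=[e,u]_R$. Then the multiplication map $W/U\times U\to W$, $(x,y)\mapsto xy$, is surjective.
   Context: $S_n$ is the symmetric group with product $(uv)(i)=u(v(i))$, generated by adjacent transpositions. The length $\ell(w)$ is the number of inversions $\{(i,j): i<j,\ w(i)>w(j)\}$. Right weak order: $v\leq_R w$ iff $w=vz$ with $\ell(w)=\ell(v)+\ell(z)$; $[e,u]_R=\{v:v\leq_R u\}$. For $U\subseteq W$, $W/U=\{w\in W:\ell(wu)=\ell(w)+\ell(u)\ \forall u\in U\}$. *)

theory Defs
  imports "HOL-Combinatorics.Combinatorics"
begin

text \<open>S_n as permutations of {0..<n} (functions nat => nat fixing everything outside);
  product (u v)(i) = u (v i) is composition u o v.\<close>

definition Sym :: "nat \<Rightarrow> (nat \<Rightarrow> nat) set" where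
  "Sym n = {p. p permutes {..<n}}"

definition perm_length :: "nat \<Rightarrow> (nat \<Rightarrow> nat) \<Rightarrow> nat" where
  "perm_length n w = card {(i, j). i < j \<and> j < n \<and> w i > w j}"

definition weak_le_R :: "nat \<Rightarrow> (nat \<Rightarrow> nat) \<Rightarrow> (nat \<Rightarrow> nat) \<Rightarrow> bool" where
  "weak_le_R n v w \<longleftrightarrow> (\<exists>z \<in> Sym n. w = v \<circ> z \<and>
      perm_length n w = perm_length n v + perm_length n z)"

definition weak_interval_R :: "nat \<Rightarrow> (nat \<Rightarrow> nat) \<Rightarrow> (nat \<Rightarrow> nat) set" where
  "weak_interval_R n u = {v \<in> Sym n. weak_le_R n v u}"

definition right_quot :: "nat \<Rightarrow> (nat \<Rightarrow> nat) set \<Rightarrow> (nat \<Rightarrow> nat) set" where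
  "right_quot n U = {w \<in> Sym n. \<forall>u \<in> U. perm_length n (w \<circ> u) = perm_length n w + perm_length n u}"

end

theory Submission
  imports Defs
begin


definition Inv :: "nat \<Rightarrow> (nat \<Rightarrow> nat) \<Rightarrow> (nat \<times> nat) set" where
  "Inv n p = {(i, j). i < j \<and> j < n \<and> p i > p j}"

lemma len_Inv: "perm_length n p = card (Inv n p)"
  by (simp add: perm_length_def Inv_def)

lemma finite_Inv: "finite (Inv n p)"
proof -
  have "Inv n p \<subseteq> {..<n} \<times> {..<n}" by (auto simp: Inv_def)
  thus ?thesis by (rule finite_subset) auto
qed

lemma perm_lt: "p permutes {..<n} \<Longrightarrow> i < n \<Longrightarrow> p i < n"
  using permutes_in_image by fastforce

lemma perm_inv_lt: "p permutes {..<n} \<Longrightarrow> i < n \<Longrightarrow> inv p i < n"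
  using perm_lt permutes_inv by blast

lemma master:
  assumes p: "p permutes {..<n}" and q: "q permutes {..<n}"
  shows "card (Inv n (p \<circ> inv q)) = card ((Inv n p - Inv n q) \<union> (Inv n q - Inv n p))"
proof -
  let ?D = "(Inv n p - Inv n q) \<union> (Inv n q - Inv n p)"
  define f where "f = (\<lambda>(a::nat, b::nat). (min (q a) (q b), max (q a) (q b)))"
  have injq: "inj q" using q permutes_inj by blast
  have qi: "q (inv q x) = x" for x by (rule permutes_inverses(1)[OF q])
  have iq: "inv q (q x) = x" for x by (rule permutes_inverses(2)[OF q])
  have "bij_betw f ?D (Inv n (p \<circ> inv q))"
    unfolding bij_betw_def
  proof (intro conjI)
    show "inj_on f ?D"
    proof (rule inj_onI)
      fix x y assume x: "x \<in> ?D" and y: "y \<in> ?D" and e: "f x = f y"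
      obtain a b where ab: "x = (a, b)" by (cases x)
      obtain c d where cd: "y = (c, d)" by (cases y)
      have "a < b" "c < d" using x y ab cd by (auto simp: Inv_def)
      have "q a \<noteq> q b" "q c \<noteq> q d" using \<open>a<b\<close> \<open>c<d\<close> injq by (auto dest: injD)
      from e have "min (q a) (q b) = min (q c) (q d)" "max (q a) (q b) = max (q c) (q d)"
        by (auto simp: f_def ab cd)
      hence "(q a = q c \<and> q b = q d) \<or> (q a = q d \<and> q b = q c)"
        by (auto simp: min_def max_def split: if_splits)
      hence "(a = c \<and> b = d) \<or> (a = d \<and> b = c)" using injq by (auto dest: injD)
      thus "x = y" using \<open>a<b\<close> \<open>c<d\<close> ab cd by auto
    qed
  next
    show "f ` ?D = Inv n (p \<circ> inv q)"
    proof
      show "f ` ?D \<subseteq> Inv n (p \<circ> inv q)"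
      proof
        fix z assume "z \<in> f ` ?D"
        then obtain a b where ab: "(a, b) \<in> ?D" and z: "z = f (a, b)" by auto
        have abn: "a < b" "b < n" using ab by (auto simp: Inv_def)
        have "q a < n" "q b < n" using abn perm_lt[OF q] by auto
        have "q a \<noteq> q b" using abn injq by (auto dest: injD)
        show "z \<in> Inv n (p \<circ> inv q)"
        proof (cases "(a, b) \<in> Inv n p - Inv n q")
          case True
          hence "p a > p b" "\<not> q a > q b" using abn by (auto simp: Inv_def)
          hence "q a < q b" using \<open>q a \<noteq> q b\<close> by auto
          thus ?thesis using z \<open>p a > p b\<close> \<open>q b < n\<close> by (auto simp: f_def Inv_def iq)
        next
          case False
          hence "(a, b) \<in> Inv n q - Inv n p" using ab by auto
          hence "q a > q b" "\<not> p a > p b" using abn by (auto simp: Inv_def)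
          have "p a \<noteq> p b" using abn p permutes_inj by (auto dest: injD)
          hence "p a < p b" using \<open>\<not> p a > p b\<close> by auto
          thus ?thesis using z \<open>q a > q b\<close> \<open>q a < n\<close> by (auto simp: f_def Inv_def iq)
        qed
      qed
    next
      show "Inv n (p \<circ> inv q) \<subseteq> f ` ?D"
      proof
        fix z assume z: "z \<in> Inv n (p \<circ> inv q)"
        then obtain i j where ij: "z = (i, j)" "i < j" "j < n" "p (inv q i) > p (inv q j)"
          by (auto simp: Inv_def)
        define a where "a = inv q i"
        define b where "b = inv q j"
        have "a < n" "b < n" using ij perm_inv_lt[OF q] by (auto simp: a_def b_def)
        have qa: "q a = i" and qb: "q b = j" by (auto simp: a_def b_def qi)
        have "a \<noteq> b" using ij qa qb by auto
        show "z \<in> f ` ?D"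
        proof (cases "a < b")
          case True
          have "(a, b) \<in> ?D" using True \<open>b < n\<close> ij qa qb by (auto simp: Inv_def a_def b_def)
          moreover have "f (a, b) = z" using qa qb ij by (auto simp: f_def)
          ultimately show ?thesis by force
        next
          case False
          hence "b < a" using \<open>a \<noteq> b\<close> by auto
          have "(b, a) \<in> ?D" using \<open>b < a\<close> \<open>a < n\<close> ij qa qb by (auto simp: Inv_def a_def b_def)
          moreover have "f (b, a) = z" using qa qb ij by (auto simp: f_def)
          ultimately show ?thesis by force
        qed
      qed
    qed
  qed
  thus ?thesis by (metis bij_betw_same_card)
qed




abbreviation "sw i \<equiv> Transposition.transpose i (Suc i)"

lemma Inv_id: "Inv n id = {}"
  by (auto simp: Inv_def)

lemma len_inv: "q permutes {..<n} \<Longrightarrow> perm_length n (inv q) = perm_length n q"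
  using master[of id n q] by (simp add: len_Inv Inv_id)

lemma subadd:
  assumes a: "a permutes {..<n}" and b: "b permutes {..<n}"
  shows "perm_length n (a \<circ> b) \<le> perm_length n a + perm_length n b"
proof -
  have bi: "inv b permutes {..<n}" using b permutes_inv by blast
  have "inv (inv b) = b" using b permutes_inv_inv by blast
  hence "perm_length n (a \<circ> b) = card ((Inv n a - Inv n (inv b)) \<union> (Inv n (inv b) - Inv n a))"
    using master[OF a bi] by (simp add: len_Inv)
  also have "\<dots> \<le> card (Inv n a) + card (Inv n (inv b))"
    by (rule order_trans[OF card_Un_le]) (intro add_mono card_mono; auto simp: finite_Inv)
  also have "\<dots> = perm_length n a + perm_length n b"
    using len_inv[OF b] by (simp add: len_Inv)
  finally show ?thesis .
qed

lemma leL_iff: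
  assumes w: "w permutes {..<n}" and v: "v permutes {..<n}"
  shows "perm_length n w = perm_length n (w \<circ> inv v) + perm_length n v \<longleftrightarrow> Inv n v \<subseteq> Inv n w"
proof -
  let ?A = "Inv n w" and ?B = "Inv n v"
  have fA: "finite ?A" and fB: "finite ?B" by (auto simp: finite_Inv)
  have c1: "card ((?A - ?B) \<union> (?B - ?A)) = card (?A - ?B) + card (?B - ?A)"
    by (rule card_Un_disjoint) (auto simp: fA fB)
  have c2: "card ?A = card (?A - ?B) + card (?A \<inter> ?B)"
    using card_Int_Diff[OF fA, of ?B] by simp
  have c3: "card ?B = card (?B - ?A) + card (?A \<inter> ?B)"
    using card_Int_Diff[OF fB, of ?A] by (simp add: Int_commute)
  have "perm_length n (w \<circ> inv v) = card ((?A - ?B) \<union> (?B - ?A))"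
    using master[OF w v] by (simp add: len_Inv)
  hence "perm_length n w = perm_length n (w \<circ> inv v) + perm_length n v \<longleftrightarrow> card (?B - ?A) = 0"
    using c1 c2 c3 by (simp add: len_Inv)
  also have "\<dots> \<longleftrightarrow> ?B \<subseteq> ?A" using fB by auto
  finally show ?thesis .
qed

lemma sw_permutes: "Suc i < n \<Longrightarrow> sw i permutes {..<n}"
  by (rule permutes_swap_id) auto

lemma Inv_sw: "Suc i < n \<Longrightarrow> Inv n (sw i) = {(i, Suc i)}"
  by (auto simp: Inv_def Transposition.transpose_def split: if_splits)

lemma len_comp_sw:
  assumes p: "p permutes {..<n}" and i: "Suc i < n"
  shows "perm_length n (p \<circ> sw i) = (if p i < p (Suc i) then perm_length n p + 1 else perm_length n p - 1)"
proof -
  have "perm_length n (p \<circ> sw i) = card ((Inv n p - {(i, Suc i)}) \<union> ({(i, Suc i)} - Inv n p))"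
    using master[OF p sw_permutes[OF i]] Inv_sw[OF i] by (simp add: len_Inv)
  moreover have "(i, Suc i) \<in> Inv n p \<longleftrightarrow> \<not> p i < p (Suc i)"
  proof -
    have "p i \<noteq> p (Suc i)" using p permutes_inj by (fastforce dest: injD)
    thus ?thesis using i by (auto simp: Inv_def)
  qed
  ultimately show ?thesis
    using finite_Inv[of n p]
    by (auto simp: len_Inv card_Diff_singleton insert_Diff_if card_insert_if)
qed

lemma len_sw: "Suc i < n \<Longrightarrow> perm_length n (sw i) = 1"
  by (simp add: len_Inv Inv_sw)

lemma incr_ge:
  assumes "\<forall>i. Suc i < n \<longrightarrow> q i < q (Suc i)"
  shows "i < n \<Longrightarrow> i \<le> q i"
proof (induction i)
  case 0 then show ?case by simp
next
  case (Suc i)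
  hence "i \<le> q i" by simp
  moreover have "q i < q (Suc i)" using assms Suc.prems by blast
  ultimately show ?case by simp
qed

lemma descent_exists:
  assumes q: "q permutes {..<n}" and ne: "q \<noteq> id"
  shows "\<exists>i. Suc i < n \<and> q (Suc i) < q i"
proof (rule ccontr)
  assume h: "\<not> (\<exists>i. Suc i < n \<and> q (Suc i) < q i)"
  have inc: "\<forall>i. Suc i < n \<longrightarrow> q i < q (Suc i)"
  proof (intro allI impI)
    fix i assume "Suc i < n"
    hence "\<not> q (Suc i) < q i" using h by blast
    moreover have "q i \<noteq> q (Suc i)" using permutes_inj[OF q] by (auto dest: injD)
    ultimately show "q i < q (Suc i)" by simp
  qed
  have ge: "\<forall>i\<in>{..<n}. i \<le> q i" using incr_ge[OF inc] by auto
  have sq: "(\<Sum>i\<in>{..<n}. i) = (\<Sum>i\<in>{..<n}. q i)"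
    using sum.permute[OF q, of "\<lambda>i. i"] by (simp add: o_def)
  have fix1: "\<forall>i\<in>{..<n}. q i = i"
  proof (rule ccontr)
    assume "\<not> (\<forall>i\<in>{..<n}. q i = i)"
    then obtain k where k: "k \<in> {..<n}" "q k \<noteq> k" by auto
    hence "k < q k" using ge by force
    hence "(\<Sum>i\<in>{..<n}. i) < (\<Sum>i\<in>{..<n}. q i)"
      using ge k by (intro sum_strict_mono_ex1) auto
    thus False using sq by simp
  qed
  have fix2: "q i = i" if "i \<notin> {..<n}" for i using permutes_not_in[OF q that] .
  have "q = id"
  proof
    fix i show "q i = id i" using fix1 fix2 by (cases "i < n") auto
  qed
  thus False using ne by simp
qed



lemma Inv_mem: "(a, b) \<in> Inv n f \<longleftrightarrow> a < b \<and> b < n \<and> f b < f a"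
  by (simp add: Inv_def)

lemma sw_app: "sw i i = Suc i" "sw i (Suc i) = i" "k \<noteq> i \<Longrightarrow> k \<noteq> Suc i \<Longrightarrow> sw i k = k"
  by (auto simp: Transposition.transpose_def)

lemma E1:
  assumes sub: "Inv n y \<subseteq> Inv n w" and yi: "y i < y (Suc i)" and wi: "w (Suc i) < w i"
    and i: "Suc i < n"
  shows "Inv n (y \<circ> sw i) \<subseteq> Inv n w"
proof
  have H: "w b < w a" if "a < b" "b < n" "y b < y a" for a b
    using subsetD[OF sub, of "(a, b)"] that by (simp add: Inv_mem)
  fix z assume z: "z \<in> Inv n (y \<circ> sw i)"
  obtain a b where ab: "z = (a, b)" by (cases z)
  have abn: "a < b" "b < n" and yab: "y (sw i b) < y (sw i a)" using z ab by (auto simp: Inv_mem)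
  have "w b < w a"
  proof (cases "a = i")
    case True
    show ?thesis
    proof (cases "b = Suc i")
      case True thus ?thesis using \<open>a = i\<close> wi by simp
    next
      case False
      hence "b > Suc i" using abn \<open>a = i\<close> by simp
      hence "y b < y (Suc i)" using yab \<open>a = i\<close> sw_app by simp
      hence "w b < w (Suc i)" using H \<open>b > Suc i\<close> abn by blast
      thus ?thesis using wi \<open>a = i\<close> by simp
    qed
  next
    case ai: False
    show ?thesis
    proof (cases "a = Suc i")
      case True
      hence "b > Suc i" using abn by simp
      hence "y b < y i" using yab True sw_app by simp
      hence "y b < y (Suc i)" using yi by simp
      thus ?thesis using H \<open>b > Suc i\<close> abn True by blast
    next
      case asi: False
      hence ya: "y (sw i a) = y a" using ai sw_app by simp
      show ?thesis
      proof (cases "b = i")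
        case True
        hence "y i < y a" using yab ya yi sw_app by simp
        thus ?thesis using H abn True by blast
      next
        case bi: False
        show ?thesis
        proof (cases "b = Suc i")
          case True
          hence "y i < y a" using yab ya sw_app by simp
          hence "w i < w a" using H abn True ai by (metis Suc_lessD less_SucE)
          thus ?thesis using wi True by simp
        next
          case False
          hence "y b < y a" using yab ya bi sw_app by simp
          thus ?thesis using H abn by blast
        qed
      qed
    qed
  qed
  thus "z \<in> Inv n w" using ab abn by (simp add: Inv_mem)
qed

lemma E3:
  assumes sub: "Inv n y \<subseteq> Inv n (w \<circ> sw i)" and yi: "y i < y (Suc i)" and wi: "w i < w (Suc i)"
    and i: "Suc i < n"
  shows "Inv n y \<subseteq> Inv n w"
proof
  have H: "w (sw i b) < w (sw i a)" if "a < b" "b < n" "y b < y a" for a b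
    using subsetD[OF sub, of "(a, b)"] that by (simp add: Inv_mem)
  fix z assume z: "z \<in> Inv n y"
  obtain a b where ab: "z = (a, b)" by (cases z)
  have abn: "a < b" "b < n" and yab: "y b < y a" using z ab by (auto simp: Inv_mem)
  have "w b < w a"
  proof (cases "a = i")
    case True
    show ?thesis
    proof (cases "b = Suc i")
      case True thus ?thesis using \<open>a = i\<close> yab yi by simp
    next
      case False
      hence bgt: "b > Suc i" using abn \<open>a = i\<close> by simp
      hence "y b < y (Suc i)" using yab \<open>a = i\<close> yi by simp
      hence "w (sw i b) < w (sw i (Suc i))" using H bgt abn by blast
      thus ?thesis using bgt \<open>a = i\<close> sw_app by simp
    qed
  next
    case ai: False
    show ?thesis
    proof (cases "a = Suc i")
      case True
      hence bgt: "b > Suc i" using abn by simp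
      hence "w (sw i b) < w (sw i (Suc i))" using H abn True yab by blast
      hence "w b < w i" using bgt sw_app by simp
      thus ?thesis using wi True by simp
    next
      case asi: False
      hence wa: "w (sw i a) = w a" using ai sw_app by simp
      show ?thesis
      proof (cases "b = i")
        case True
        have "w (sw i b) < w (sw i a)" using H abn yab by blast
        hence "w (Suc i) < w a" using True wa sw_app by simp
        thus ?thesis using wi True by simp
      next
        case bi: False
        show ?thesis
        proof (cases "b = Suc i")
          case True
          have "a < i" using abn True ai by simp
          have "y i < y a" using yab yi True by simp
          hence "w (sw i i) < w (sw i a)" using H[of a i] \<open>a < i\<close> i by simp
          hence "w (Suc i) < w a" using wa sw_app by simp
          thus ?thesis using True by simp
        next
          case False
          have "w (sw i b) < w (sw i a)" using H abn yab by blast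
          thus ?thesis using wa bi False sw_app by simp
        qed
      qed
    qed
  qed
  thus "z \<in> Inv n w" using ab abn by (simp add: Inv_mem)
qed



lemma len_id: "perm_length n id = 0"
  by (simp add: len_Inv Inv_id)

lemma len_zero_id:
  assumes p: "p permutes {..<n}" and l: "perm_length n p = 0"
  shows "p = id"
proof (rule ccontr)
  assume "p \<noteq> id"
  then obtain i where i: "Suc i < n" "p (Suc i) < p i" using descent_exists[OF p] by blast
  hence "(i, Suc i) \<in> Inv n p" by (simp add: Inv_mem)
  hence "card (Inv n p) > 0" using finite_Inv[of n p] card_gt_0_iff by blast
  thus False using l by (simp add: len_Inv)
qed

lemma inv_comp_perm:
  assumes "p permutes {..<n}" "q permutes {..<n}"
  shows "inv (p \<circ> q) = inv q \<circ> inv p"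
  using assms by (intro o_inv_distrib) (auto intro: permutes_bij)

lemma left_descent:
  assumes z: "z permutes {..<n}" and ne: "z \<noteq> id"
  shows "\<exists>i. Suc i < n \<and> perm_length n (sw i \<circ> z) + 1 = perm_length n z"
proof -
  have zi: "inv z permutes {..<n}" by (rule permutes_inv[OF z])
  have "inv z \<noteq> id"
  proof
    assume "inv z = id"
    hence "inv (inv z) = id" by simp
    thus False using permutes_inv_inv[OF z] ne by simp
  qed
  then obtain i where i: "Suc i < n" "inv z (Suc i) < inv z i" using descent_exists[OF zi] by blast
  have s: "sw i permutes {..<n}" using sw_permutes[OF i(1)] .
  have l1: "perm_length n (inv z \<circ> sw i) = perm_length n (inv z) - 1"
    using len_comp_sw[OF zi i(1)] i(2) by simp
  have "(i, Suc i) \<in> Inv n (inv z)" using i by (simp add: Inv_mem)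
  hence pos: "perm_length n (inv z) > 0" using finite_Inv[of n "inv z"] card_gt_0_iff by (auto simp: len_Inv)
  have "inv (sw i \<circ> z) = inv z \<circ> sw i" using inv_comp_perm[OF s z] by simp
  hence "perm_length n (sw i \<circ> z) = perm_length n (inv z \<circ> sw i)"
    using len_inv[OF permutes_compose[OF z s]] by simp
  moreover have "perm_length n (inv z) = perm_length n z" using len_inv[OF z] .
  ultimately show ?thesis using l1 pos i(1) by auto
qed

definition leL :: "nat \<Rightarrow> (nat \<Rightarrow> nat) \<Rightarrow> (nat \<Rightarrow> nat) \<Rightarrow> bool" where
  "leL n y w \<longleftrightarrow> perm_length n w = perm_length n (w \<circ> inv y) + perm_length n y"

definition leR :: "nat \<Rightarrow> (nat \<Rightarrow> nat) \<Rightarrow> (nat \<Rightarrow> nat) \<Rightarrow> bool" where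
  "leR n y u \<longleftrightarrow> perm_length n u = perm_length n y + perm_length n (inv y \<circ> u)"

lemma gluing:
  assumes u: "u permutes {..<n}"
  shows "\<forall>w y. w permutes {..<n} \<longrightarrow> y permutes {..<n} \<longrightarrow> perm_length n (inv y \<circ> u) = k \<longrightarrow>
          leL n y w \<longrightarrow> leR n y u \<longrightarrow>
          perm_length n ((w \<circ> inv y) \<circ> u) \<noteq> perm_length n (w \<circ> inv y) + perm_length n u \<longrightarrow>
          (\<exists>y'. y' permutes {..<n} \<and> leL n y' w \<and> leR n y' u \<and> perm_length n y' > perm_length n y)"
proof (induction k)
  case 0
  show ?case
  proof (intro allI impI)
    fix w y
    assume w: "w permutes {..<n}" and y: "y permutes {..<n}" and k: "perm_length n (inv y \<circ> u) = 0"
      and lw: "leL n y w" and lu: "leR n y u"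
      and nr: "perm_length n ((w \<circ> inv y) \<circ> u) \<noteq> perm_length n (w \<circ> inv y) + perm_length n u"
    have "inv y \<circ> u = id" using len_zero_id[OF permutes_compose[OF u permutes_inv[OF y]] k] .
    hence "y \<circ> (inv y \<circ> u) = y" by simp
    hence "u = y" using permutes_inv_o(1)[OF y] by (simp add: o_assoc)
    hence "(w \<circ> inv y) \<circ> u = w" using permutes_inv_o(2)[OF y] by (simp add: comp_assoc)
    thus "\<exists>y'. y' permutes {..<n} \<and> leL n y' w \<and> leR n y' u \<and> perm_length n y' > perm_length n y"
      using nr lw \<open>u = y\<close> by (simp add: leL_def)
  qed
next
  case (Suc k)
  show ?case
  proof (intro allI impI)
    fix w y
    assume w: "w permutes {..<n}" and y: "y permutes {..<n}" and k: "perm_length n (inv y \<circ> u) = Suc k"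
      and lw: "leL n y w" and lu: "leR n y u"
      and nr: "perm_length n ((w \<circ> inv y) \<circ> u) \<noteq> perm_length n (w \<circ> inv y) + perm_length n u"
    define z where "z = inv y \<circ> u"
    have yi: "inv y permutes {..<n}" using permutes_inv[OF y] .
    have z: "z permutes {..<n}" unfolding z_def using permutes_compose[OF u yi] .
    have "z \<noteq> id" using k len_id unfolding z_def by force
    then obtain i where i: "Suc i < n" and lz: "perm_length n (sw i \<circ> z) + 1 = perm_length n z"
      using left_descent[OF z] by blast
    define s where "s = sw i"
    have s: "s permutes {..<n}" unfolding s_def using sw_permutes[OF i] .
    have ss: "s \<circ> s = id" unfolding s_def by simp
    have invs: "inv s = s" unfolding s_def by simp
    define z2 where "z2 = s \<circ> z"
    define ys where "ys = y \<circ> s"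
    have ys: "ys permutes {..<n}" unfolding ys_def using permutes_compose[OF s y] .
    have z2: "z2 permutes {..<n}" unfolding z2_def using permutes_compose[OF z s] .
    have invys: "inv ys = s \<circ> inv y" unfolding ys_def using inv_comp_perm[OF y s] invs by simp
    have z2eq: "inv ys \<circ> u = z2" unfolding z2_def z_def invys by (simp add: o_assoc)
    have ueq: "ys \<circ> z2 = u"
    proof -
      have "ys \<circ> z2 = y \<circ> (s \<circ> s) \<circ> inv y \<circ> u" unfolding ys_def z2_def z_def by (simp add: o_assoc)
      also have "\<dots> = u" using ss permutes_inv_o(1)[OF y] by (simp add: o_assoc)
      finally show ?thesis .
    qed
    have a1: "perm_length n ys \<le> perm_length n y + 1"
      using subadd[OF y s] len_sw[OF i] unfolding ys_def s_def by simp
    have a2: "perm_length n u \<le> perm_length n ys + perm_length n z2"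
      using subadd[OF ys z2] ueq by simp
    have a3: "perm_length n u = perm_length n y + perm_length n z2 + 1"
      using lu lz unfolding leR_def z2_def z_def s_def by simp
    have lys: "perm_length n ys = perm_length n y + 1" using a1 a2 a3 by simp
    have lrys: "leR n ys u" unfolding leR_def using z2eq a3 lys by simp
    have kz2: "perm_length n (inv ys \<circ> u) = k" using z2eq a3 lu k unfolding leR_def by simp
    have yasc: "y i < y (Suc i)"
    proof (rule ccontr)
      assume "\<not> y i < y (Suc i)"
      hence "perm_length n ys = perm_length n y - 1"
        using len_comp_sw[OF y i] unfolding ys_def s_def by simp
      thus False using lys by simp
    qed
    have wne: "w i \<noteq> w (Suc i)" using permutes_inj[OF w] by (auto dest: injD)
    show "\<exists>y'. y' permutes {..<n} \<and> leL n y' w \<and> leR n y' u \<and> perm_length n y' > perm_length n y"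
    proof (cases "w (Suc i) < w i")
      case True
      have "Inv n y \<subseteq> Inv n w" using lw leL_iff[OF w y] unfolding leL_def by simp
      hence "Inv n ys \<subseteq> Inv n w" using E1[OF _ yasc True i] unfolding ys_def s_def by simp
      hence "leL n ys w" using leL_iff[OF w ys] unfolding leL_def by simp
      thus ?thesis using ys lrys lys by auto
    next
      case False
      hence wasc: "w i < w (Suc i)" using wne by simp
      define ws where "ws = w \<circ> s"
      have ws: "ws permutes {..<n}" unfolding ws_def using permutes_compose[OF s w] .
      have lws: "perm_length n ws = perm_length n w + 1"
        using len_comp_sw[OF w i] wasc unfolding ws_def s_def by simp
      have xeq: "ws \<circ> inv ys = w \<circ> inv y"
        unfolding ws_def invys by (simp add: fun_eq_iff s_def)
      have lwys: "leL n ys ws" using lw lws lys xeq unfolding leL_def by simp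
      have nr2: "perm_length n ((ws \<circ> inv ys) \<circ> u) \<noteq> perm_length n (ws \<circ> inv ys) + perm_length n u"
        using nr xeq by simp
      obtain y2 where y2: "y2 permutes {..<n}" and l2w: "leL n y2 ws" and l2u: "leR n y2 u"
        and gt: "perm_length n y2 > perm_length n ys"
        using Suc.IH ws ys kz2 lwys lrys nr2 by blast
      have y2ne: "y2 i \<noteq> y2 (Suc i)" using permutes_inj[OF y2] by (auto dest: injD)
      show ?thesis
      proof (cases "y2 (Suc i) < y2 i")
        case True
        define y3 where "y3 = y2 \<circ> s"
        have y3: "y3 permutes {..<n}" unfolding y3_def using permutes_compose[OF s y2] .
        have ly3: "perm_length n y3 = perm_length n y2 - 1"
          using len_comp_sw[OF y2 i] True unfolding y3_def s_def by simp
        have invy3: "inv y3 = s \<circ> inv y2" unfolding y3_def using inv_comp_perm[OF y2 s] invs by simp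
        define c where "c = inv y2 \<circ> u"
        have c: "c permutes {..<n}" unfolding c_def using permutes_compose[OF u permutes_inv[OF y2]] .
        have sc: "s \<circ> c permutes {..<n}" using permutes_compose[OF c s] .
        have y3u: "inv y3 \<circ> u = s \<circ> c" unfolding invy3 c_def by (simp add: o_assoc)
        have ueq3: "y3 \<circ> (s \<circ> c) = u"
        proof -
          have "y3 \<circ> (s \<circ> c) = y2 \<circ> (s \<circ> s) \<circ> inv y2 \<circ> u" unfolding y3_def c_def by (simp add: o_assoc)
          also have "\<dots> = u" using ss permutes_inv_o(1)[OF y2] by (simp add: o_assoc)
          finally show ?thesis .
        qed
        have b1: "perm_length n (s \<circ> c) \<le> 1 + perm_length n c"
          using subadd[OF s c] len_sw[OF i] unfolding s_def by simp
        have b2: "perm_length n u \<le> perm_length n y3 + perm_length n (s \<circ> c)"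
          using subadd[OF y3 sc] ueq3 by simp
        have b3: "perm_length n u = perm_length n y2 + perm_length n c" using l2u unfolding leR_def c_def .
        have lr3: "leR n y3 u" unfolding leR_def using b1 b2 b3 ly3 gt y3u by simp
        define a where "a = ws \<circ> inv y2"
        have b4: "perm_length n ws = perm_length n a + perm_length n y2" using l2w unfolding leL_def a_def .
        have weq: "w \<circ> inv y3 = a"
          unfolding invy3 a_def ws_def by (simp add: fun_eq_iff s_def)
        have ll3: "leL n y3 w" unfolding leL_def using weq b4 lws ly3 gt by simp
        show ?thesis using y3 ll3 lr3 ly3 gt lys by auto
      next
        case False
        hence y2asc: "y2 i < y2 (Suc i)" using y2ne by simp
        have "Inv n y2 \<subseteq> Inv n ws" using l2w leL_iff[OF ws y2] unfolding leL_def by simp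
        hence "Inv n y2 \<subseteq> Inv n w" using E3[OF _ y2asc wasc i] unfolding ws_def s_def by simp
        hence "leL n y2 w" using leL_iff[OF w y2] unfolding leL_def by simp
        thus ?thesis using y2 l2u gt lys by auto
      qed
    qed
  qed
qed



theorem theorem4p5:
  fixes n :: nat and u :: "nat \<Rightarrow> nat"
  assumes "u \<in> Sym n"
  shows "\<forall>w \<in> Sym n. \<exists>x \<in> right_quot n (weak_interval_R n u).
           \<exists>y \<in> weak_interval_R n u. w = x \<circ> y"
proof
  fix w assume "w \<in> Sym n"
  hence w: "w permutes {..<n}" by (simp add: Sym_def)
  have u: "u permutes {..<n}" using assms by (simp add: Sym_def)
  define C where "C = {y. y permutes {..<n} \<and> leL n y w \<and> leR n y u}"
  have finC: "finite C"
    by (rule finite_subset[OF _ finite_permutations[of "{..<n}"]]) (auto simp: C_def)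
  have idC: "id \<in> C" by (simp add: C_def leL_def leR_def len_id)
  define M where "M = Max (perm_length n ` C)"
  have "M \<in> perm_length n ` C" unfolding M_def using finC idC by (intro Max_in) auto
  then obtain y where yC: "y \<in> C" and yM: "perm_length n y = M" by auto
  have maxy: "perm_length n y' \<le> perm_length n y" if "y' \<in> C" for y'
    unfolding yM M_def using finC that by (intro Max_ge) auto
  have y: "y permutes {..<n}" and lw: "leL n y w" and lu: "leR n y u" using yC by (auto simp: C_def)
  define x where "x = w \<circ> inv y"
  have x: "x permutes {..<n}" unfolding x_def using permutes_compose[OF permutes_inv[OF y] w] .
  have red: "perm_length n (x \<circ> u) = perm_length n x + perm_length n u"
  proof (rule ccontr)
    assume "perm_length n (x \<circ> u) \<noteq> perm_length n x + perm_length n u"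
    then obtain y' where "y' permutes {..<n}" "leL n y' w" "leR n y' u" "perm_length n y' > perm_length n y"
      using gluing[OF u, of "perm_length n (inv y \<circ> u)"] w y lw lu unfolding x_def by blast
    hence "y' \<in> C" "perm_length n y' > perm_length n y" by (auto simp: C_def)
    thus False using maxy by fastforce
  qed
  have yint: "y \<in> weak_interval_R n u"
    unfolding weak_interval_R_def weak_le_R_def
  proof (intro CollectI conjI bexI)
    show "y \<in> Sym n" using y by (simp add: Sym_def)
    show "inv y \<circ> u \<in> Sym n" using permutes_compose[OF u permutes_inv[OF y]] by (simp add: Sym_def)
    show "u = y \<circ> (inv y \<circ> u)" using permutes_inv_o(1)[OF y] by (simp add: o_assoc)
    show "perm_length n u = perm_length n y + perm_length n (inv y \<circ> u)" using lu by (simp add: leR_def)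
  qed
  have xq: "x \<in> right_quot n (weak_interval_R n u)"
    unfolding right_quot_def
  proof (intro CollectI conjI ballI)
    show "x \<in> Sym n" using x by (simp add: Sym_def)
    fix v assume "v \<in> weak_interval_R n u"
    then obtain c where v: "v permutes {..<n}" and c: "c permutes {..<n}" and uc: "u = v \<circ> c"
      and lc: "perm_length n u = perm_length n v + perm_length n c"
      by (auto simp: weak_interval_R_def weak_le_R_def Sym_def)
    have xv: "x \<circ> v permutes {..<n}" using permutes_compose[OF v x] .
    have d1: "perm_length n (x \<circ> u) \<le> perm_length n (x \<circ> v) + perm_length n c"
      using subadd[OF xv c] uc by (simp add: o_assoc)
    have d2: "perm_length n (x \<circ> v) \<le> perm_length n x + perm_length n v" using subadd[OF x v] .
    show "perm_length n (x \<circ> v) = perm_length n x + perm_length n v" using d1 d2 red lc by simp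
  qed
  have "w = x \<circ> y" unfolding x_def using permutes_inv_o(2)[OF y] by (simp add: comp_assoc)
  thus "\<exists>x \<in> right_quot n (weak_interval_R n u). \<exists>y \<in> weak_interval_R n u. w = x \<circ> y"
    using xq yint by blast
qed

end
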